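(* Let $n$ be a positive integer and let $\Omega_1,\Omega_2$ be two distinct copies of $2^{[n]}$. For $i=1,2$ let $\bm{p}_i=(p_i^{(1)},\dots,p_i^{(n)})$ be a probability vector (i.e. $0<p_i^{(\ell)}<1$), write $p_i:=p_i^{(1)}$, and let $\mu_i$ be the product measure on $\Omega_i$, $\mu_i(U)=\sum_{x\in U}\prod_{\ell\in x}p_i^{(\ell)}\prod_{k\in[n]\setminus x}(1-p_i^{(k)})$. Assume that $p_i=\max\{p_i^{(\ell)}:\ell\in[n]\}$ for $i=1,2$, that $p_1\geqslant p_2$, and that $p_1\leqslant 1/2$. If $U_1\subset\Omega_1$, $U_2\subset\Omega_2$ are cross-intersecting (i.e. $x\cap y\neq\emptyset$ for all $x\in U_1$, $y\in U_2$), then $\mu_1(U_1)\mu_2(U_2)\leqslant p_1p_2$.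
   Context: A probability vector is a vector with all coordinates strictly between $0$ and $1$. *)

theory Defs
  imports Complex_Main
begin

(* [n] = {1..n}; a probability vector p : {1..n} -> (0,1) is modelled as nat => real *)

definition prod_measure :: "nat \<Rightarrow> (nat \<Rightarrow> real) \<Rightarrow> nat set set \<Rightarrow> real" where
  "prod_measure n p U =
     (\<Sum>x\<in>U. (\<Prod>l\<in>x. p l) * (\<Prod>k\<in>{1..n} - x. 1 - p k))"

definition cross_intersecting :: "'a set set \<Rightarrow> 'a set set \<Rightarrow> bool" where
  "cross_intersecting U V \<longleftrightarrow> (\<forall>x\<in>U. \<forall>y\<in>V. x \<inter> y \<noteq> {})"

end

theory Submission
  imports Defs
begin

lemma bern1:
  fixes r x :: real
  assumes "1 \<le> r" "-1 \<le> x"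
  shows "1 + r*x \<le> (1+x) powr r"
proof -
  let ?h = "\<lambda>t. (1+t) powr r - r*t"
  have h0: "?h 0 = 1" by simp
  have cont: "continuous_on {a..b} ?h" if "-1 \<le> a" for a b
    using assms that by (intro continuous_intros continuous_on_powr') auto
  have der: "DERIV ?h t :> r * (1+t) powr (r-1) - r" if "-1 < t" for t
    using that assms by (auto intro!: derivative_eq_intros)
  show ?thesis
  proof (cases "0 \<le> x")
    case True
    have "?h 0 \<le> ?h x"
    proof (rule DERIV_nonneg_imp_increasing_open[OF True])
      fix t assume t: "0 < t" "t < x"
      have "1 \<le> (1+t) powr (r-1)" using t assms by (intro ge_one_powr_ge_zero) auto
      hence "0 \<le> r * (1+t) powr (r-1) - r" using assms by (simp add: algebra_simps)
      thus "\<exists>y. DERIV ?h t :> y \<and> 0 \<le> y" using der[of t] t by auto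
    qed (use cont[of 0 x] in auto)
    thus ?thesis by simp
  next
    case False
    have "?h 0 \<le> ?h x"
    proof (rule DERIV_nonpos_imp_decreasing_open[of x 0 ?h])
      show "x \<le> 0" using False by simp
      fix t assume t: "x < t" "t < 0"
      have tp: "0 < 1+t" using t assms by simp
      have "(1+t) powr (r-1) \<le> (1+t) powr 0"
        using t assms tp by (intro powr_mono') auto
      hence "(1+t) powr (r-1) \<le> 1" using tp by simp
      hence "r * (1+t) powr (r-1) - r \<le> 0" using assms
        by (metis diff_le_0_iff_le mult_left_mono mult.right_neutral order_trans zero_le_one)
      thus "\<exists>y. DERIV ?h t :> y \<and> y \<le> 0" using der[of t] t tp by auto
    qed (use cont[of x 0] assms in auto)
    thus ?thesis by simp
  qed
qed

lemma bern2:
  fixes r x :: real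
  assumes "0 \<le> r" "r \<le> 1" "-1 \<le> x"
  shows "(1+x) powr r \<le> 1 + r*x"
proof (cases "r = 0")
  case True thus ?thesis by simp
next
  case False
  hence rpos: "0 < r" using assms by simp
  let ?h = "\<lambda>t. (1+t) powr r - r*t"
  have cont: "continuous_on {a..b} ?h" if "-1 \<le> a" for a b
    using assms that rpos by (intro continuous_intros continuous_on_powr') auto
  have der: "DERIV ?h t :> r * (1+t) powr (r-1) - r" if "-1 < t" for t
    using that assms by (auto intro!: derivative_eq_intros)
  show ?thesis
  proof (cases "0 \<le> x")
    case True
    have "?h x \<le> ?h 0"
    proof (rule DERIV_nonpos_imp_decreasing_open[OF True])
      fix t assume t: "0 < t" "t < x"
      have "(1+t) powr (r-1) \<le> (1+t) powr 0"
        using t assms by (intro powr_mono) auto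
      hence "(1+t) powr (r-1) \<le> 1" using t by simp
      hence "r * (1+t) powr (r-1) - r \<le> 0" using assms
        by (metis diff_le_0_iff_le mult_left_mono mult.right_neutral)
      thus "\<exists>y. DERIV ?h t :> y \<and> y \<le> 0" using der[of t] t by auto
    qed (use cont[of 0 x] in auto)
    thus ?thesis by simp
  next
    case False
    have "?h x \<le> ?h 0"
    proof (rule DERIV_nonneg_imp_increasing_open[of x 0 ?h])
      show "x \<le> 0" using False by simp
      fix t assume t: "x < t" "t < 0"
      have tp: "0 < 1+t" using t assms by simp
      have "(1+t) powr 0 \<le> (1+t) powr (r-1)"
        using t assms tp by (intro powr_mono') auto
      hence "1 \<le> (1+t) powr (r-1)" using tp by simp
      hence "0 \<le> r * (1+t) powr (r-1) - r" using assms
        by (metis diff_ge_0_iff_ge mult_left_mono mult.right_neutral)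
      thus "\<exists>y. DERIV ?h t :> y \<and> 0 \<le> y" using der[of t] t tp by auto
    qed (use cont[of x 0] assms in auto)
    thus ?thesis by simp
  qed
qed

lemma incr_diff:
  fixes g x y d :: real
  assumes "1 \<le> g" "0 \<le> x" "x \<le> y" "0 \<le> d"
  shows "(x+d) powr g - x powr g \<le> (y+d) powr g - y powr g"
proof -
  let ?h = "\<lambda>t. (t+d) powr g - t powr g"
  have "?h x \<le> ?h y"
  proof (rule DERIV_nonneg_imp_increasing_open[of x y ?h, OF \<open>x \<le> y\<close>])
    fix t assume t: "x < t" "t < y"
    hence tpos: "0 < t" using assms by linarith
    have "DERIV ?h t :> g * (t+d) powr (g-1) - g * t powr (g-1)"
      using tpos assms by (auto intro!: derivative_eq_intros)
    moreover have "t powr (g-1) \<le> (t+d) powr (g-1)"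
      using powr_mono2[of "g-1" t "t+d"] tpos assms by simp
    hence "0 \<le> g * (t+d) powr (g-1) - g * t powr (g-1)"
      using assms by (simp add: right_diff_distrib[symmetric])
    ultimately show "\<exists>y. DERIV ?h t :> y \<and> 0 \<le> y" by blast
  next
    show "continuous_on {x..y} ?h" using assms
      by (intro continuous_intros continuous_on_powr') auto
  qed
  thus ?thesis by simp
qed

lemma superadd:
  fixes g x d :: real
  assumes "1 \<le> g" "0 \<le> x" "0 \<le> d"
  shows "x powr g + d powr g \<le> (x+d) powr g"
  using incr_diff[of g 0 x d] assms by (simp add: add.commute)

lemma mink:
  fixes g U V p q :: real
  assumes g: "1 \<le> g" and U: "0 \<le> U" "U \<le> V" and p: "0 \<le> p" "p \<le> 1"
    and q: "0 \<le> q" "q \<le> (1-p) powr g"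
  shows "(1-q) * U powr g + q * V powr g \<le> ((1-p)*V + p*U) powr g"
proof -
  define c where "c = q powr (1/g)"
  have c0: "0 \<le> c" by (simp add: c_def)
  have cg: "c powr g = q" using q g by (simp add: c_def powr_powr)
  have "c \<le> ((1-p) powr g) powr (1/g)"
    unfolding c_def using q g by (intro powr_mono2) auto
  also have "\<dots> = 1-p" using p g by (simp add: powr_powr)
  finally have c1: "c \<le> 1-p" .
  have "(c*U + c*(V-U)) powr g - (c*U) powr g \<le> (U + c*(V-U)) powr g - U powr g"
    using c0 c1 U p g by (intro incr_diff) (auto simp: mult_left_le_one_le)
  also have "c*U + c*(V-U) = c*V" by (simp add: algebra_simps)
  finally have "q * V powr g - q * U powr g \<le> (U + c*(V-U)) powr g - U powr g"
    using c0 U cg by (simp add: powr_mult)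
  moreover have "(U + c*(V-U)) powr g \<le> ((1-p)*V + p*U) powr g"
  proof (rule powr_mono2)
    show "0 \<le> U + c*(V-U)" using c0 U by simp
    have "c*(V-U) \<le> (1-p)*(V-U)" using c1 U by (intro mult_right_mono) auto
    thus "U + c*(V-U) \<le> (1-p)*V + p*U" by (simp add: algebra_simps)
  qed (use g in auto)
  ultimately show ?thesis by (simp add: algebra_simps)
qed

lemma prod_pm_le1:
  fixes s g :: real
  assumes "0 \<le> s" "s \<le> 1" "0 \<le> g"
  shows "(1-s) powr g * (1+s) powr g \<le> 1"
proof -
  have "(1-s) powr g * (1+s) powr g = ((1-s)*(1+s)) powr g"
    using assms by (simp add: powr_mult)
  also have "\<dots> \<le> 1"
  proof (intro powr_le1)
    have "s*s \<le> 1" using assms by (intro mult_le_one) auto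
    moreover have "0 \<le> s*s" by simp
    ultimately show "\<bar>(1-s)*(1+s)\<bar> \<le> 1" by (simp add: algebra_simps abs_if)
  qed (use assms in auto)
  finally show ?thesis .
qed

lemma W1:
  fixes c g z :: real
  assumes c: "0 < c" "c < 1" and g: "1 \<le> g" "c/(1-c) \<le> g" and z: "0 \<le> z" "z \<le> c"
  shows "(1-z) * z powr g \<le> (1-c) * c powr g"
proof (cases "z = 0")
  case True thus ?thesis using c g by simp
next
  case False
  define r where "r = z/c"
  define s where "s = 1 - r"
  have r: "0 < r" "r \<le> 1" using z c False by (auto simp: r_def field_simps)
  have s: "0 \<le> s" "s < 1" using r by (auto simp: s_def)
  have zr: "z = c*r" using c by (simp add: r_def)
  have zp: "z powr g = c powr g * r powr g" using zr c r by (simp add: powr_mult)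
  have b1: "1 + g*s \<le> (1+s) powr g" using bern1[of g s] g s by simp
  have rs: "r = 1 + (-s)" by (simp add: s_def)
  have "r powr g * (1+s) powr g \<le> 1"
    using prod_pm_le1[of s g] s g by (simp add: rs)
  have "1 - c*r = (1-c) * (1 + (c/(1-c))*s)" using c by (simp add: s_def field_simps)
  also have "\<dots> \<le> (1-c) * (1 + g*s)"
  proof -
    have "(c/(1-c))*s \<le> g*s" using g s by (intro mult_right_mono) auto
    thus ?thesis using c by (intro mult_left_mono) auto
  qed
  finally have A: "1 - c*r \<le> (1-c) * (1 + g*s)" .
  have "(1 - c*r) * r powr g \<le> (1-c) * (1 + g*s) * r powr g"
    using A by (intro mult_right_mono) auto
  also have "\<dots> \<le> (1-c) * ((1+s) powr g * r powr g)"
    using b1 c by (simp add: mult.assoc mult_left_mono mult_right_mono)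
  also have "\<dots> \<le> (1-c) * 1"
    using \<open>r powr g * (1+s) powr g \<le> 1\<close> c by (intro mult_left_mono) (auto simp: mult.commute)
  finally have B: "(1 - c*r) * r powr g \<le> 1-c" by simp
  have "(1-z) * z powr g = c powr g * ((1 - c*r) * r powr g)" by (subst zp) (simp add: zr)
  also have "\<dots> \<le> c powr g * (1-c)" using B by (intro mult_left_mono) auto
  finally show ?thesis by (simp add: mult.commute)
qed

lemma W2:
  fixes c b z :: real
  assumes c: "0 < c" "c < 1" and b: "0 \<le> b" "b \<le> c/(1-c)" and z: "0 < z" "z \<le> c"
  shows "(1-z) * z powr b \<le> c powr b / (1+b)"
proof -
  define r where "r = z/c"
  define s where "s = 1 - r"
  have r: "0 < r" "r \<le> 1" using z c by (auto simp: r_def field_simps)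
  have s: "0 \<le> s" "s < 1" using r by (auto simp: s_def)
  have zr: "z = c*r" using c by (simp add: r_def)
  have zp: "z powr b = c powr b * r powr b" using zr c r by (simp add: powr_mult)
  have rs: "r = 1 + (-s)" by (simp add: s_def)
  have cb: "b \<le> c*(1+b)" using b c by (simp add: field_simps)
  have A: "1 - c*r \<le> (1 + b*s)/(1+b)"
  proof -
    have "b*r \<le> c*(1+b)*r" using cb r by (intro mult_right_mono) auto
    thus ?thesis using b by (simp add: field_simps s_def)
  qed
  have C: "r powr b * (1 + b*s) \<le> 1"
  proof (cases "1 \<le> b")
    case True
    have "1 + b*s \<le> (1+s) powr b" using bern1[of b s] True s by simp
    hence "r powr b * (1 + b*s) \<le> r powr b * (1+s) powr b" by (intro mult_left_mono) auto
    also have "\<dots> \<le> 1" using prod_pm_le1[of s b] s b by (simp add: rs)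
    finally show ?thesis .
  next
    case False
    have "r powr b \<le> 1 + b*(-s)" using bern2[of b "-s"] False b s by (simp add: rs)
    hence "r powr b * (1 + b*s) \<le> (1 - b*s) * (1 + b*s)"
      using b s by (intro mult_right_mono) auto
    also have "\<dots> = 1 - (b*s)*(b*s)" by (simp add: algebra_simps)
    also have "\<dots> \<le> 1" by simp
    finally show ?thesis .
  qed
  have "(1 - c*r) * r powr b \<le> (1 + b*s)/(1+b) * r powr b"
    using A by (intro mult_right_mono) auto
  also have "\<dots> = (r powr b * (1 + b*s))/(1+b)" by simp
  also have "\<dots> \<le> 1/(1+b)" using C b by (intro divide_right_mono) auto
  finally have B: "(1 - c*r) * r powr b \<le> 1/(1+b)" .
  have "(1-z) * z powr b = c powr b * ((1 - c*r) * r powr b)" by (subst zp) (simp add: zr)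
  also have "\<dots> \<le> c powr b * (1/(1+b))" using B by (intro mult_left_mono) auto
  finally show ?thesis by simp
qed

locale pp =
  fixes P1 P2 :: real
  assumes P2pos: "0 < P2" and P21: "P2 \<le> P1" and P1h: "P1 \<le> 1/2"
begin

definition gA where "gA = ln P2 / ln (1-P1)"
definition gB where "gB = ln P1 / ln (1-P2)"
definition phi where "phi x = P2 + (1-P2) * (1 - x/P1) powr gA"
definition RR where "RR x y \<longleftrightarrow> 0 \<le> x \<and> x \<le> 1 \<and> 0 \<le> y \<and> y \<le> 1 \<and>
   y \<le> (1-x) powr gA \<and> x \<le> (1-y) powr gB \<and> (x < P1 \<longrightarrow> y \<le> phi x)"

lemma P1pos: "0 < P1" using P2pos P21 by linarith
lemma P1lt1: "P1 < 1" using P1h by linarith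
lemma P2lt1: "P2 < 1" using P1h P21 by linarith
lemma cge: "1/2 \<le> 1 - P1" using P1h by linarith

lemma gA_ge1: "1 \<le> gA"
proof -
  have "ln (1-P1) < 0" using P1pos P1lt1 by simp
  moreover have "ln P2 \<le> ln (1-P1)" using P2pos P21 P1h by simp
  ultimately show ?thesis unfolding gA_def by simp
qed

lemma gB_ge1: "1 \<le> gB"
proof -
  have "ln (1-P2) < 0" using P2pos P2lt1 by simp
  moreover have "ln P1 \<le> ln (1-P2)" using P1pos P21 P1h by simp
  ultimately show ?thesis unfolding gB_def by simp
qed

lemma powA: "(1-P1) powr gA = P2"
proof -
  have "ln (1-P1) \<noteq> 0" using P1pos P1lt1 by simp
  thus ?thesis using P1lt1 P2pos by (simp add: powr_def gA_def)
qed

lemma powB: "(1-P2) powr gB = P1"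
proof -
  have "ln (1-P2) \<noteq> 0" using P2pos P2lt1 by simp
  thus ?thesis using P2lt1 P1pos by (simp add: powr_def gB_def)
qed

lemma entropy: "(1-P1)/P1 \<le> gA"
proof -
  define K where "K = (1-P1)/P1"
  have K1: "1 \<le> K" using P1pos P1h by (simp add: K_def field_simps)
  have "1 + K*(-P1) \<le> (1 + (-P1)) powr K" using bern1[of K "-P1"] K1 P1lt1 by simp
  moreover have "1 + K*(-P1) = P1" using P1pos by (simp add: K_def field_simps)
  ultimately have "P2 \<le> (1-P1) powr K" using P21 by simp
  hence "ln P2 \<le> ln ((1-P1) powr K)" using P2pos P1lt1 by (subst ln_le_cancel_iff) auto
  hence "ln P2 \<le> K * ln (1-P1)" by simp
  moreover have "ln (1-P1) < 0" using P1pos P1lt1 by simp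
  ultimately have "K \<le> ln P2 / ln (1-P1)" by (simp add: le_divide_eq)
  thus ?thesis by (simp add: K_def gA_def)
qed

lemma RR_prod_case1:
  assumes "P1 \<le> a" "a \<le> 1" "0 \<le> b" "b \<le> (1-a) powr gA"
  shows "a*b \<le> P1*P2"
proof -
  have "a*b \<le> a * (1-a) powr gA" using assms P1pos by (intro mult_left_mono) auto
  also have "\<dots> = (1-(1-a)) * (1-a) powr gA" by simp
  also have "\<dots> \<le> (1-(1-P1)) * (1-P1) powr gA"
    using P1pos P1lt1 gA_ge1 entropy assms by (intro W1) auto
  also have "\<dots> = P1*P2" by (simp add: powA)
  finally show ?thesis .
qed

lemma RR_prod_case2:
  assumes "0 < a" "a \<le> P1*P1" "0 \<le> b" "b \<le> 1" "a \<le> (1-b) powr gB"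
  shows "a*b \<le> P1*P2"
proof -
  define \<sigma> where "\<sigma> = ln a / ln P1"
  have lnP1: "ln P1 < 0" using P1pos P1lt1 by simp
  have "ln a \<le> ln (P1*P1)" using assms P1pos by (subst ln_le_cancel_iff) auto
  hence "ln a \<le> 2 * ln P1" using P1pos by (simp add: ln_mult)
  hence s2: "2 \<le> \<sigma>" using lnP1 unfolding \<sigma>_def by (simp add: le_divide_eq)
  have aeq: "P1 powr \<sigma> = a" using lnP1 assms P1pos by (simp add: powr_def \<sigma>_def)
  have "P1 powr \<sigma> = ((1-P2) powr gB) powr \<sigma>" by (simp add: powB)
  also have "\<dots> = ((1-P2) powr \<sigma>) powr gB" by (simp add: powr_powr mult.commute)
  finally have "((1-P2) powr \<sigma>) powr gB \<le> (1-b) powr gB" using aeq assms by simp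
  hence le1: "(1-P2) powr \<sigma> \<le> 1-b"
  proof (rule contrapos_pp)
    assume "\<not> (1-P2) powr \<sigma> \<le> 1-b"
    hence "(1-b) powr gB < ((1-P2) powr \<sigma>) powr gB"
      using gB_ge1 assms by (intro powr_less_mono2) auto
    thus "\<not> ((1-P2) powr \<sigma>) powr gB \<le> (1-b) powr gB" by simp
  qed
  have "1 + \<sigma> * (-P2) \<le> (1 + (-P2)) powr \<sigma>" using bern1[of \<sigma> "-P2"] s2 P2lt1 by simp
  with le1 have bs: "b \<le> \<sigma> * P2" by simp
  have "P1 * P1 powr (\<sigma>-1) = P1 powr 1 * P1 powr (\<sigma>-1)" using P1pos by simp
  also have "\<dots> = P1 powr (1 + (\<sigma>-1))" by (rule powr_add[symmetric])
  also have "\<dots> = P1 powr \<sigma>" by simp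
  finally have aP: "a = P1 * P1 powr (\<sigma>-1)" using aeq by simp
  have "P1 powr (\<sigma>-1) \<le> (1/2) powr (\<sigma>-1)" using P1pos P1h s2 by (intro powr_mono2) auto
  also have "\<dots> = 1 / 2 powr (\<sigma>-1)" by (simp add: powr_divide)
  finally have A: "P1 powr (\<sigma>-1) \<le> 1 / 2 powr (\<sigma>-1)" .
  have "1 + (\<sigma>-1)*1 \<le> (1+1) powr (\<sigma>-1)" using bern1[of "\<sigma>-1" 1] s2 by simp
  hence B: "\<sigma> \<le> 2 powr (\<sigma>-1)" by simp
  have "\<sigma> * P1 powr (\<sigma>-1) \<le> \<sigma> * (1 / 2 powr (\<sigma>-1))" using A s2 by (intro mult_left_mono) auto
  also have "\<dots> \<le> 1" using B s2 by (simp add: divide_le_eq)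
  finally have C: "\<sigma> * P1 powr (\<sigma>-1) \<le> 1" .
  have "a*b \<le> a * (\<sigma>*P2)" using bs assms by (intro mult_left_mono) auto
  also have "\<dots> = P1 * (\<sigma> * P1 powr (\<sigma>-1)) * P2" using aP by (simp add: algebra_simps)
  also have "\<dots> \<le> P1 * 1 * P2" using C P1pos P2pos by (intro mult_right_mono mult_left_mono) auto
  finally show ?thesis by simp
qed

lemma key_ineq:
  assumes z: "0 < z" "z \<le> 1-P1"
  shows "(1-P2) * ((1-z) * z powr (gA-1)) \<le> P2"
proof -
  define c where "c = 1-P1"
  define \<beta> where "\<beta> = gA - 1"
  have c: "0 < c" "c < 1" "1/2 \<le> c" using P1pos P1lt1 cge by (auto simp: c_def)
  have b0: "0 \<le> \<beta>" using gA_ge1 by (simp add: \<beta>_def)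
  have P2c: "P2 = c * c powr \<beta>"
  proof -
    have "P2 = c powr (1 + \<beta>)" using powA by (simp add: c_def \<beta>_def)
    also have "\<dots> = c * c powr \<beta>" using c by (simp add: powr_add)
    finally show ?thesis .
  qed
  have cb: "0 < c powr \<beta>" using c by simp
  show ?thesis
  proof (cases "c/(1-c) \<le> \<beta>")
    case True
    have "1 \<le> c/(1-c)" using c by (simp add: field_simps)
    hence b1: "1 \<le> \<beta>" using True by linarith
    have "(1-z) * z powr \<beta> \<le> (1-c) * c powr \<beta>"
      using True c z b1 by (intro W1) (auto simp: c_def)
    hence "(1-P2) * ((1-z) * z powr \<beta>) \<le> (1-P2) * ((1-c) * c powr \<beta>)"
      using P2lt1 by (intro mult_left_mono) auto
    also have "\<dots> = ((1-P2) * (1-c)) * c powr \<beta>" by simp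
    also have "\<dots> \<le> c * c powr \<beta>"
    proof (intro mult_right_mono)
      have "0 \<le> P2*(1-c)" using P2pos c by simp
      moreover have "(1-P2)*(1-c) = (1-c) - P2*(1-c)" by (simp add: algebra_simps)
      ultimately show "(1-P2)*(1-c) \<le> c" using c by linarith
    qed (use cb in auto)
    finally have "(1-P2) * ((1-z) * z powr \<beta>) \<le> P2" by (simp only: P2c[symmetric])
    thus ?thesis by (simp only: \<beta>_def)
  next
    case False
    hence "(1-z) * z powr \<beta> \<le> c powr \<beta> / (1+\<beta>)"
      using c z b0 by (intro W2) (auto simp: c_def)
    hence "(1-P2) * ((1-z) * z powr \<beta>) \<le> (1-P2) * (c powr \<beta> / (1+\<beta>))"
      using P2lt1 by (intro mult_left_mono) auto
    also have "\<dots> \<le> c * c powr \<beta>"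
    proof -
      have D: "1 - P2 \<le> (1+\<beta>) * c"
      proof (cases "1 \<le> \<beta>")
        case True
        have "2 * c \<le> (1+\<beta>) * c" using True c by (intro mult_right_mono) auto
        thus ?thesis using c P2pos by linarith
      next
        case False
        have "(1/2) powr gA \<le> c powr gA" using c gA_ge1 by (intro powr_mono2) auto
        hence "(1/2) powr gA \<le> P2" using powA by (simp add: c_def)
        moreover have "(1/2::real) powr gA = (1/2) * (1/2) powr \<beta>"
        proof -
          have "(1/2::real) powr gA = (1/2) powr (1 + \<beta>)" by (simp add: \<beta>_def)
          also have "\<dots> = (1/2) powr 1 * (1/2) powr \<beta>" by (rule powr_add)
          finally show ?thesis by simp
        qed
        moreover have "1 - \<beta> \<le> (1/2::real) powr \<beta>"
        proof -
          have "ln (2::real) \<le> 1" using ln_le_minus_one[of 2] by simp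
          hence "\<beta> * ln 2 \<le> \<beta> * 1" using b0 by (intro mult_left_mono) auto
          hence "1 - \<beta> \<le> 1 + \<beta> * ln (1/2)" by (simp add: ln_div)
          also have "\<dots> \<le> exp (\<beta> * ln (1/2))" by simp
          also have "\<dots> = (1/2) powr \<beta>" by (simp add: powr_def)
          finally show ?thesis .
        qed
        ultimately have "(1 - \<beta>)/2 \<le> P2" by simp
        moreover have "(1+\<beta>)/2 \<le> (1+\<beta>) * c"
        proof -
          have "(1+\<beta>) * (1/2) \<le> (1+\<beta>) * c" using c b0 by (intro mult_left_mono) auto
          thus ?thesis by simp
        qed
        ultimately show ?thesis by simp
      qed
      have "(1-P2) * (c powr \<beta> / (1+\<beta>)) = ((1-P2)/(1+\<beta>)) * c powr \<beta>" by simp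
      also have "\<dots> \<le> c * c powr \<beta>"
        using D b0 cb by (intro mult_right_mono) (auto simp: divide_le_eq mult.commute)
      finally show ?thesis .
    qed
    finally have "(1-P2) * ((1-z) * z powr \<beta>) \<le> P2" by (simp only: P2c[symmetric])
    thus ?thesis by (simp only: \<beta>_def)
  qed
qed

lemma RR_prod_case3:
  assumes "P1*P1 \<le> a" "a < P1" "0 \<le> b" "b \<le> phi a"
  shows "a*b \<le> P1*P2"
proof -
  define z where "z = 1 - a/P1"
  have z: "0 < z" "z \<le> 1 - P1" using assms P1pos by (auto simp: z_def field_simps)
  have aeq: "a = P1 * (1-z)" using P1pos by (simp add: z_def)
  have phieq: "phi a = P2 + (1-P2) * z powr gA" by (simp add: phi_def z_def)
  have "z powr gA = z powr (1 + (gA-1))" by simp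
  also have "\<dots> = z powr 1 * z powr (gA-1)" by (rule powr_add)
  finally have zg: "z powr gA = z * z powr (gA-1)" using z by simp
  have K: "(1-P2) * ((1-z) * z powr (gA-1)) \<le> P2" using key_ineq z by simp
  have "(1-z) * phi a = (1-z)*P2 + z * ((1-P2) * ((1-z) * z powr (gA-1)))"
    by (simp add: phieq zg algebra_simps)
  also have "\<dots> \<le> (1-z)*P2 + z * P2" using K z by (intro add_left_mono mult_left_mono) auto
  finally have A: "(1-z) * phi a \<le> P2" by (simp add: algebra_simps)
  have a0: "0 \<le> a" using assms(1) P1pos by (smt (verit) mult_pos_pos)
  have "a*b \<le> a * phi a" using assms a0 by (intro mult_left_mono) auto
  also have "\<dots> = P1 * ((1-z) * phi a)" by (simp add: aeq)
  also have "\<dots> \<le> P1 * P2" using A P1pos by (intro mult_left_mono) auto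
  finally show ?thesis .
qed

lemma RR_prod:
  assumes "RR a b" shows "a*b \<le> P1*P2"
proof -
  have r: "0 \<le> a" "a \<le> 1" "0 \<le> b" "b \<le> 1" "b \<le> (1-a) powr gA" "a \<le> (1-b) powr gB"
    "a < P1 \<Longrightarrow> b \<le> phi a" using assms unfolding RR_def by auto
  show ?thesis
  proof (cases "P1 \<le> a")
    case True thus ?thesis using r by (intro RR_prod_case1) auto
  next
    case False
    show ?thesis
    proof (cases "a \<le> P1*P1")
      case True
      show ?thesis
      proof (cases "a = 0")
        case True thus ?thesis using P1pos P2pos by simp
      next
        case False
        thus ?thesis using r \<open>a \<le> P1*P1\<close> by (intro RR_prod_case2) auto
      qed
    next
      case False
      thus ?thesis using r \<open>\<not> P1 \<le> a\<close> by (intro RR_prod_case3) auto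
    qed
  qed
qed

lemma phi_ge: "P2 \<le> phi x"
  unfolding phi_def using P2lt1 by simp

lemma phi_anti: assumes "x \<le> y" "y \<le> P1" shows "phi y \<le> phi x"
proof -
  have "(1 - y/P1) powr gA \<le> (1 - x/P1) powr gA"
    using assms P1pos gA_ge1 by (intro powr_mono2) (auto simp: field_simps)
  thus ?thesis unfolding phi_def using P2lt1 by (intro add_left_mono mult_left_mono) auto
qed

lemma phi_step2:
  fixes p a0 a1 D V S :: real
  assumes p: "0 \<le> p" "p \<le> P1" and D: "0 \<le> D" "D \<le> 1-P1" and V: "0 \<le> V" "V \<le> 1"
    and S: "S = 1 - ((1-p)*(P1*(1-V)) + p*(1-D))/P1" and Spos: "0 < S"
  shows "D powr gA + P2 * V powr gA \<le> P2 + S powr gA"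
proof -
  define c where "c = 1 - P1"
  define S0 where "S0 = c*V - (c - D)"
  have c: "0 < c" "c < 1" using P1pos P1lt1 by (auto simp: c_def)
  have P2c: "P2 = c powr gA" using powA by (simp add: c_def)
  have cV: "P2 * V powr gA = (c*V) powr gA"
  proof -
    have "(c*V) powr gA = c powr gA * V powr gA" using c V by (simp add: powr_mult)
    also have "\<dots> = P2 * V powr gA" by (simp only: P2c[symmetric])
    finally show ?thesis by simp
  qed
  have SS0: "S - S0 = (P1 - p)*V + (c - D)*(1 - p/P1)"
    using P1pos by (simp add: S S0_def c_def field_simps)
  have "0 \<le> (P1 - p)*V" using p V by simp
  moreover have "0 \<le> (c - D)*(1 - p/P1)"
  proof -
    have "0 \<le> c - D" using D by (simp add: c_def)
    moreover have "0 \<le> 1 - p/P1" using p P1pos by (simp add: field_simps)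
    ultimately show ?thesis by simp
  qed
  ultimately have S0S: "S0 \<le> S" using SS0 by linarith
  show ?thesis
  proof (cases "0 \<le> S0")
    case True
    have "(S0 + (c-D)) powr gA - S0 powr gA \<le> (D + (c-D)) powr gA - D powr gA"
    proof (rule incr_diff)
      show "S0 \<le> D" using c V by (simp add: S0_def mult_left_le_one_le)
    qed (use gA_ge1 True D in \<open>auto simp: c_def\<close>)
    moreover have "S0 + (c-D) = c*V" by (simp add: S0_def)
    moreover have "S0 powr gA \<le> S powr gA" using True S0S gA_ge1 by (intro powr_mono2) auto
    ultimately show ?thesis using cV by (simp add: P2c[symmetric])
  next
    case False
    have "(c*V) powr gA \<le> (c-D) powr gA" using False c V gA_ge1 by (intro powr_mono2) (auto simp: S0_def)
    moreover have "D powr gA + (c-D) powr gA \<le> (D + (c-D)) powr gA"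
      using D gA_ge1 by (intro superadd) (auto simp: c_def)
    ultimately have "D powr gA + (c*V) powr gA \<le> P2" by (simp add: P2c[symmetric])
    moreover have "0 \<le> S powr gA" by simp
    ultimately show ?thesis using cV by linarith
  qed
qed

lemma closure:
  assumes R00: "RR a0 b0" and R01: "RR a0 b1" and R10: "RR a1 b0"
    and p: "0 \<le> p" "p \<le> P1" and q: "0 \<le> q" "q \<le> P2"
  shows "RR ((1-p)*a0 + p*a1) ((1-q)*b0 + q*b1)"
proof -
  define a where "a = (1-p)*a0 + p*a1"
  define b where "b = (1-q)*b0 + q*b1"
  have p1: "p \<le> 1" and q1: "q \<le> 1" using p q P1h P21 by linarith+
  from R00 have r00: "0 \<le> a0" "a0 \<le> 1" "0 \<le> b0" "b0 \<le> 1" "b0 \<le> (1-a0) powr gA"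
    "a0 \<le> (1-b0) powr gB" "a0 < P1 \<Longrightarrow> b0 \<le> phi a0" unfolding RR_def by auto
  from R01 have r01: "0 \<le> b1" "b1 \<le> 1" "b1 \<le> (1-a0) powr gA"
    "a0 \<le> (1-b1) powr gB" "a0 < P1 \<Longrightarrow> b1 \<le> phi a0" unfolding RR_def by auto
  from R10 have r10: "0 \<le> a1" "a1 \<le> 1" "b0 \<le> (1-a1) powr gA"
    "a1 \<le> (1-b0) powr gB" "a1 < P1 \<Longrightarrow> b0 \<le> phi a1" unfolding RR_def by auto
  have convex: "min x y \<le> (1-t)*x + t*y \<and> (1-t)*x + t*y \<le> max x y"
    if "0 \<le> t" "t \<le> 1" for x y t :: real
  proof (cases "x \<le> y")
    case True
    have "0 \<le> t*(y-x)" "0 \<le> (1-t)*(y-x)" using True that by simp_all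
    hence "0 \<le> t*y - t*x" "0 \<le> y - x - t*y + t*x" by (simp_all add: algebra_simps)
    thus ?thesis using True by (simp add: min_def max_def algebra_simps)
  next
    case False
    have "0 \<le> t*(x-y)" "0 \<le> (1-t)*(x-y)" using False that by simp_all
    hence "0 \<le> t*x - t*y" "0 \<le> x - y - t*x + t*y" by (simp_all add: algebra_simps)
    thus ?thesis using False by (simp add: min_def max_def algebra_simps)
  qed
  have ab: "min a0 a1 \<le> a" "a \<le> max a0 a1" using convex[OF p(1) p1, of a0 a1] by (auto simp: a_def)
  have bb: "min b0 b1 \<le> b" "b \<le> max b0 b1" using convex[OF q(1) q1, of b0 b1] by (auto simp: b_def)
  have a01: "0 \<le> a" "a \<le> 1" using ab r00 r10 by (auto simp: min_def max_def split: if_splits)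
  have b01: "0 \<le> b" "b \<le> 1" using bb r00 r01 by (auto simp: min_def max_def split: if_splits)
  have qA: "q \<le> (1-p) powr gA"
  proof -
    have "(1-P1) powr gA \<le> (1-p) powr gA" using p P1lt1 gA_ge1 by (intro powr_mono2) auto
    thus ?thesis using q powA by simp
  qed
  have pB: "p \<le> (1-q) powr gB"
  proof -
    have "(1-P2) powr gB \<le> (1-q) powr gB" using q P2lt1 gB_ge1 by (intro powr_mono2) auto
    thus ?thesis using p powB by simp
  qed
  have C1: "b \<le> (1-a) powr gA"
  proof (cases "a1 \<le> a0")
    case True
    hence "a \<le> a0" using ab by (simp add: max_def)
    hence "(1-a0) powr gA \<le> (1-a) powr gA" using r00 gA_ge1 by (intro powr_mono2) auto
    moreover have "b \<le> (1-a0) powr gA" using bb r00 r01 by (auto simp: max_def split: if_splits)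
    ultimately show ?thesis by simp
  next
    case False
    have "(1-q) * (1-a1) powr gA + q * (1-a0) powr gA \<le> ((1-p)*(1-a0) + p*(1-a1)) powr gA"
      using False r00 r10 p p1 q qA gA_ge1 by (intro mink) auto
    moreover have "(1-p)*(1-a0) + p*(1-a1) = 1 - a" by (simp add: a_def algebra_simps)
    moreover have "b \<le> (1-q) * (1-a1) powr gA + q * (1-a0) powr gA"
      unfolding b_def using r10 r01 q q1 by (intro add_mono mult_left_mono) auto
    ultimately show ?thesis by simp
  qed
  have C3: "a \<le> (1-b) powr gB"
  proof (cases "b1 \<le> b0")
    case True
    hence "b \<le> b0" using bb by (simp add: max_def)
    hence "(1-b0) powr gB \<le> (1-b) powr gB" using r00 gB_ge1 by (intro powr_mono2) auto
    moreover have "a \<le> (1-b0) powr gB" using ab r00 r10 by (auto simp: max_def split: if_splits)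
    ultimately show ?thesis by simp
  next
    case False
    have "(1-p) * (1-b1) powr gB + p * (1-b0) powr gB \<le> ((1-q)*(1-b0) + q*(1-b1)) powr gB"
      using False r00 r01 q q1 p pB gB_ge1 by (intro mink) auto
    moreover have "(1-q)*(1-b0) + q*(1-b1) = 1 - b" by (simp add: b_def algebra_simps)
    moreover have "a \<le> (1-p) * (1-b1) powr gB + p * (1-b0) powr gB"
      unfolding a_def using r10 r01 p p1 by (intro add_mono mult_left_mono) auto
    ultimately show ?thesis by simp
  qed
  have Cphi: "b \<le> phi a" if aP: "a < P1"
  proof (cases "a1 \<le> a0")
    case True
    hence aa0: "a \<le> a0" using ab by (simp add: max_def)
    show ?thesis
    proof (cases "a0 < P1")
      case True
      have "phi a0 \<le> phi a" using aa0 True by (intro phi_anti) auto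
      moreover have "b \<le> phi a0" using bb r00 r01 True by (auto simp: max_def split: if_splits)
      ultimately show ?thesis by simp
    next
      case False
      have "(1-a0) powr gA \<le> (1-P1) powr gA" using False r00 gA_ge1 by (intro powr_mono2) auto
      hence "(1-a0) powr gA \<le> P2" using powA by simp
      hence "b \<le> P2" using bb r00 r01 by (auto simp: max_def split: if_splits)
      thus ?thesis using phi_ge[of a] by simp
    qed
  next
    case False
    hence a0a: "a0 \<le> a" using ab by (simp add: min_def)
    hence a0P: "a0 < P1" using aP by simp
    have b1phi: "b1 \<le> phi a0" using r01 a0P by simp
    define V where "V = 1 - a0/P1"
    define S where "S = 1 - a/P1"
    have V: "0 < V" "V \<le> 1" using a0P r00 P1pos by (auto simp: V_def field_simps)
    have Spos: "0 < S" using aP P1pos by (simp add: S_def field_simps)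
    have phia0: "phi a0 = P2 + (1-P2) * V powr gA" by (simp add: phi_def V_def)
    have phia: "phi a = P2 + (1-P2) * S powr gA" by (simp add: phi_def S_def)
    show ?thesis
    proof (cases "a1 < P1")
      case True
      define U where "U = 1 - a1/P1"
      have U: "0 \<le> U" "U \<le> V" using True False P1pos by (auto simp: U_def V_def field_simps)
      have "(1-q) * U powr gA + q * V powr gA \<le> ((1-p)*V + p*U) powr gA"
        using U q qA p p1 gA_ge1 by (intro mink) auto
      moreover have "(1-p)*V + p*U = S" using P1pos by (simp add: U_def V_def S_def a_def field_simps)
      ultimately have M: "(1-q) * U powr gA + q * V powr gA \<le> S powr gA" by simp
      have "b \<le> (1-q) * phi a1 + q * phi a0"
        unfolding b_def using r10 True b1phi q q1 by (intro add_mono mult_left_mono) auto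
      also have "\<dots> = P2 + (1-P2) * ((1-q) * U powr gA + q * V powr gA)"
        by (simp add: phi_def U_def V_def algebra_simps)
      also have "\<dots> \<le> P2 + (1-P2) * S powr gA"
        using M P2lt1 by (intro add_left_mono mult_left_mono) auto
      finally show ?thesis using phia by simp
    next
      case True2: False
      define D where "D = 1 - a1"
      have D: "0 \<le> D" "D \<le> 1-P1" using True2 r10 by (auto simp: D_def)
      have DP2: "D powr gA \<le> P2"
      proof -
        have "D powr gA \<le> (1-P1) powr gA" using D gA_ge1 by (intro powr_mono2) auto
        thus ?thesis using powA by simp
      qed
      define Y where "Y = P2 + (1-P2) * V powr gA"
      have "0 \<le> (1-P2) * V powr gA" using P2lt1 by simp
      hence YD: "D powr gA \<le> Y" using DP2 unfolding Y_def by linarith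
      have "b \<le> (1-q) * D powr gA + q * Y"
        unfolding b_def Y_def using r10 b1phi phia0 q q1 by (intro add_mono mult_left_mono) (auto simp: D_def)
      also have "\<dots> = D powr gA + q * (Y - D powr gA)" by (simp add: algebra_simps)
      also have "\<dots> \<le> D powr gA + P2 * (Y - D powr gA)"
        using q YD by (intro add_left_mono mult_right_mono) auto
      also have "\<dots> = P2 + (1-P2) * S powr gA - (1-P2) * (P2 + S powr gA - D powr gA - P2 * V powr gA)"
        by (simp add: Y_def algebra_simps)
      also have "\<dots> \<le> P2 + (1-P2) * S powr gA"
      proof -
        have "D powr gA + P2 * V powr gA \<le> P2 + S powr gA"
        proof (rule phi_step2[OF p D])
          show "0 \<le> V" "V \<le> 1" using V by auto
          show "S = 1 - ((1-p)*(P1*(1-V)) + p*(1-D))/P1"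
            using P1pos by (simp add: S_def a_def V_def D_def field_simps)
        qed (use Spos in auto)
        thus ?thesis using P2lt1 by (simp add: mult_nonneg_nonneg)
      qed
      finally show ?thesis using phia by simp
    qed
  qed
  show ?thesis unfolding RR_def using a01 b01 C1 C3 Cphi by (simp add: a_def b_def)
qed

lemma RR00: "RR 0 0" unfolding RR_def using phi_ge[of 0] P2pos by simp
lemma RR01: "RR 0 1" unfolding RR_def phi_def using P1pos by simp
lemma RR10: "RR 1 0" unfolding RR_def using P1lt1 by simp

end


lemma pm_split:
  assumes U: "U \<subseteq> Pow {1..Suc n}"
  shows "prod_measure (Suc n) p U = (1 - p (Suc n)) * prod_measure n p {x\<in>U. Suc n \<notin> x}
     + p (Suc n) * prod_measure n p ((\<lambda>x. x - {Suc n}) ` {x\<in>U. Suc n \<in> x})"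
proof -
  define A where "A = {x\<in>U. Suc n \<notin> x}"
  define B where "B = {x\<in>U. Suc n \<in> x}"
  define W where "W m x = (\<Prod>l\<in>x. p l) * (\<Prod>k\<in>{1..m} - x. 1 - p k)" for m x
  have pmW: "prod_measure m p V = sum (W m) V" for m V unfolding prod_measure_def W_def by simp
  have finU: "finite U" using U by (rule finite_subset) simp
  have UAB: "U = A \<union> B" "A \<inter> B = {}" unfolding A_def B_def by blast+
  have finA: "finite A" "finite B" using finU unfolding A_def B_def by simp_all
  have S1: "sum (W (Suc n)) U = sum (W (Suc n)) A + sum (W (Suc n)) B"
    using UAB finA by (metis sum.union_disjoint)
  have S2: "sum (W (Suc n)) A = (1 - p (Suc n)) * sum (W n) A"
  proof -
    have "W (Suc n) x = (1 - p (Suc n)) * W n x" if "x \<in> A" for x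
    proof -
      have x1: "x \<subseteq> {1..Suc n}" "Suc n \<notin> x" using that U unfolding A_def by blast+
      have xs: "x \<subseteq> {1..n}"
      proof
        fix y assume "y \<in> x"
        thus "y \<in> {1..n}" using x1 by (force simp: le_Suc_eq)
      qed
      have "{1..Suc n} - x = insert (Suc n) ({1..n} - x)" using x1 xs by (force simp: le_Suc_eq)
      hence eq: "(\<Prod>k\<in>{1..Suc n} - x. 1 - p k) = (1 - p (Suc n)) * (\<Prod>k\<in>{1..n} - x. 1 - p k)"
        by simp
      show ?thesis unfolding W_def eq by (rule mult.left_commute)
    qed
    hence "sum (W (Suc n)) A = sum (\<lambda>x. (1 - p (Suc n)) * W n x) A" by (rule sum.cong[OF refl])
    thus ?thesis by (simp add: sum_distrib_left)
  qed
  have S3: "sum (W (Suc n)) B = p (Suc n) * sum (W n) ((\<lambda>x. x - {Suc n}) ` B)"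
  proof -
    have inj: "inj_on (\<lambda>x. x - {Suc n}) B"
    proof (rule inj_onI)
      fix x y assume "x \<in> B" "y \<in> B" "x - {Suc n} = y - {Suc n}"
      thus "x = y" unfolding B_def by (metis (mono_tags, lifting) insert_Diff mem_Collect_eq)
    qed
    have "W (Suc n) x = p (Suc n) * W n (x - {Suc n})" if "x \<in> B" for x
    proof -
      have xin: "Suc n \<in> x" and xs: "x \<subseteq> {1..Suc n}" using that U unfolding B_def by blast+
      have fx: "finite x" using xs by (rule finite_subset) simp
      have "(\<Prod>l\<in>x. p l) = p (Suc n) * (\<Prod>l\<in>x - {Suc n}. p l)"
        using fx xin by (rule prod.remove)
      moreover have "{1..Suc n} - x = {1..n} - (x - {Suc n})" using xin xs by (force simp: le_Suc_eq)
      ultimately show ?thesis unfolding W_def by (simp only: mult.assoc)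
    qed
    hence "sum (W (Suc n)) B = (\<Sum>x\<in>B. p (Suc n) * W n (x - {Suc n}))" by (rule sum.cong[OF refl])
    also have "\<dots> = p (Suc n) * (\<Sum>x\<in>B. W n (x - {Suc n}))" by (simp add: sum_distrib_left)
    also have "(\<Sum>x\<in>B. W n (x - {Suc n})) = sum (W n) ((\<lambda>x. x - {Suc n}) ` B)"
      using inj by (simp add: sum.reindex)
    finally show ?thesis .
  qed
  show ?thesis unfolding pmW using S1 S2 S3 unfolding A_def B_def by simp
qed


lemma sub_split:
  assumes "U \<subseteq> Pow {1..Suc n}"
  shows "{x\<in>U. Suc n \<notin> x} \<subseteq> Pow {1..n}" "(\<lambda>x. x - {Suc n}) ` {x\<in>U. Suc n \<in> x} \<subseteq> Pow {1..n}"
proof -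
  show "{x\<in>U. Suc n \<notin> x} \<subseteq> Pow {1..n}"
  proof
    fix x assume x: "x \<in> {x\<in>U. Suc n \<notin> x}"
    hence "x \<subseteq> {1..Suc n}" "Suc n \<notin> x" using assms by blast+
    thus "x \<in> Pow {1..n}" by (force simp: le_Suc_eq)
  qed
  show "(\<lambda>x. x - {Suc n}) ` {x\<in>U. Suc n \<in> x} \<subseteq> Pow {1..n}"
  proof
    fix y assume "y \<in> (\<lambda>x. x - {Suc n}) ` {x\<in>U. Suc n \<in> x}"
    then obtain x where x: "x \<in> U" "y = x - {Suc n}" by blast
    hence "x \<subseteq> {1..Suc n}" using assms by blast
    thus "y \<in> Pow {1..n}" using x by (force simp: le_Suc_eq)
  qed
qed

lemma ci_split:
  assumes "cross_intersecting U1 U2"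
  shows "cross_intersecting {x\<in>U1. m \<notin> x} {x\<in>U2. m \<notin> x}"
    "cross_intersecting {x\<in>U1. m \<notin> x} ((\<lambda>x. x - {m}) ` {x\<in>U2. m \<in> x})"
    "cross_intersecting ((\<lambda>x. x - {m}) ` {x\<in>U1. m \<in> x}) {x\<in>U2. m \<notin> x}"
proof -
  show "cross_intersecting {x\<in>U1. m \<notin> x} {x\<in>U2. m \<notin> x}"
    using assms unfolding cross_intersecting_def by blast
  show "cross_intersecting {x\<in>U1. m \<notin> x} ((\<lambda>x. x - {m}) ` {x\<in>U2. m \<in> x})"
    unfolding cross_intersecting_def
  proof (intro ballI)
    fix x z assume x: "x \<in> {x\<in>U1. m \<notin> x}" and z: "z \<in> (\<lambda>x. x - {m}) ` {x\<in>U2. m \<in> x}"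
    then obtain y where y: "y \<in> U2" "z = y - {m}" by blast
    have "x \<inter> y \<noteq> {}" using assms x y unfolding cross_intersecting_def by blast
    thus "x \<inter> z \<noteq> {}" using x y by blast
  qed
  show "cross_intersecting ((\<lambda>x. x - {m}) ` {x\<in>U1. m \<in> x}) {x\<in>U2. m \<notin> x}"
    unfolding cross_intersecting_def
  proof (intro ballI)
    fix z y assume z: "z \<in> (\<lambda>x. x - {m}) ` {x\<in>U1. m \<in> x}" and y: "y \<in> {x\<in>U2. m \<notin> x}"
    then obtain x where x: "x \<in> U1" "z = x - {m}" by blast
    have "x \<inter> y \<noteq> {}" using assms x y unfolding cross_intersecting_def by blast
    thus "z \<inter> y \<noteq> {}" using x y by blast
  qed
qed

context pp
begin

lemma main:
  "\<And>U1 U2 p1 p2. U1 \<subseteq> Pow {1..n} \<Longrightarrow> U2 \<subseteq> Pow {1..n} \<Longrightarrow> cross_intersecting U1 U2 \<Longrightarrow>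
    (\<forall>l\<in>{1..n}. 0 \<le> p1 l \<and> p1 l \<le> P1) \<Longrightarrow> (\<forall>l\<in>{1..n}. 0 \<le> p2 l \<and> p2 l \<le> P2) \<Longrightarrow>
    RR (prod_measure n p1 U1) (prod_measure n p2 U2)"
proof (induction n)
  case 0
  have val: "prod_measure 0 p U = (if {} \<in> U then 1 else 0)" if "U \<subseteq> Pow {1..0}" for p U
  proof -
    have "Pow {1..0::nat} = {{}}" by auto
    hence "U = {} \<or> U = {{}}" using that by auto
    thus ?thesis unfolding prod_measure_def by auto
  qed
  have "\<not> ({} \<in> U1 \<and> {} \<in> U2)" using "0.prems"(3) unfolding cross_intersecting_def by auto
  thus ?case using val[OF "0.prems"(1)] val[OF "0.prems"(2)] RR00 RR01 RR10 by auto
next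
  case (Suc n)
  note pr = Suc.prems
  let ?A1 = "{x\<in>U1. Suc n \<notin> x}"
  let ?B1 = "(\<lambda>x. x - {Suc n}) ` {x\<in>U1. Suc n \<in> x}"
  let ?A2 = "{x\<in>U2. Suc n \<notin> x}"
  let ?B2 = "(\<lambda>x. x - {Suc n}) ` {x\<in>U2. Suc n \<in> x}"
  have s1: "?A1 \<subseteq> Pow {1..n}" "?B1 \<subseteq> Pow {1..n}" using sub_split[OF pr(1)] by auto
  have s2: "?A2 \<subseteq> Pow {1..n}" "?B2 \<subseteq> Pow {1..n}" using sub_split[OF pr(2)] by auto
  note ci = ci_split[OF pr(3), of "Suc n"]
  have b1: "\<forall>l\<in>{1..n}. 0 \<le> p1 l \<and> p1 l \<le> P1" "\<forall>l\<in>{1..n}. 0 \<le> p2 l \<and> p2 l \<le> P2"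
    using pr(4,5) by auto
  have IH1: "RR (prod_measure n p1 ?A1) (prod_measure n p2 ?A2)"
    by (rule Suc.IH[OF s1(1) s2(1) ci(1) b1])
  have IH2: "RR (prod_measure n p1 ?A1) (prod_measure n p2 ?B2)"
    by (rule Suc.IH[OF s1(1) s2(2) ci(2) b1])
  have IH3: "RR (prod_measure n p1 ?B1) (prod_measure n p2 ?A2)"
    by (rule Suc.IH[OF s1(2) s2(1) ci(3) b1])
  have pq: "0 \<le> p1 (Suc n)" "p1 (Suc n) \<le> P1" "0 \<le> p2 (Suc n)" "p2 (Suc n) \<le> P2"
    using pr(4,5) by auto
  have "RR ((1 - p1 (Suc n)) * prod_measure n p1 ?A1 + p1 (Suc n) * prod_measure n p1 ?B1)
           ((1 - p2 (Suc n)) * prod_measure n p2 ?A2 + p2 (Suc n) * prod_measure n p2 ?B2)"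
    by (rule closure[OF IH1 IH2 IH3 pq])
  thus ?case unfolding pm_split[OF pr(1), of p1] pm_split[OF pr(2), of p2] .
qed

end

theorem lemma1:
  fixes n :: nat and p1 p2 :: "nat \<Rightarrow> real" and U1 U2 :: "nat set set"
  assumes "n \<ge> 1"
    and "\<forall>l\<in>{1..n}. 0 < p1 l \<and> p1 l < 1"
    and "\<forall>l\<in>{1..n}. 0 < p2 l \<and> p2 l < 1"
    and "p1 1 = Max (p1 ` {1..n})"
    and "p2 1 = Max (p2 ` {1..n})"
    and "p1 1 \<ge> p2 1"
    and "p1 1 \<le> 1/2"
    and "U1 \<subseteq> Pow {1..n}" and "U2 \<subseteq> Pow {1..n}"
    and "cross_intersecting U1 U2"
  shows "prod_measure n p1 U1 * prod_measure n p2 U2 \<le> p1 1 * p2 1"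
proof -
  have one: "1 \<in> {1..n}" using assms(1) by simp
  interpret pp "p1 1" "p2 1"
    using assms(3,6,7) one by unfold_locales auto
  have bd1: "\<forall>l\<in>{1..n}. 0 \<le> p1 l \<and> p1 l \<le> p1 1"
  proof
    fix l assume l: "l \<in> {1..n}"
    have "p1 l \<le> Max (p1 ` {1..n})" using l by (intro Max_ge) auto
    moreover have "0 < p1 l" using assms(2) l by blast
    ultimately show "0 \<le> p1 l \<and> p1 l \<le> p1 1" using assms(4) by simp
  qed
  have bd2: "\<forall>l\<in>{1..n}. 0 \<le> p2 l \<and> p2 l \<le> p2 1"
  proof
    fix l assume l: "l \<in> {1..n}"
    have "p2 l \<le> Max (p2 ` {1..n})" using l by (intro Max_ge) auto
    moreover have "0 < p2 l" using assms(3) l by blast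
    ultimately show "0 \<le> p2 l \<and> p2 l \<le> p2 1" using assms(5) by simp
  qed
  have "RR (prod_measure n p1 U1) (prod_measure n p2 U2)"
    by (rule main[OF assms(8,9,10) bd1 bd2])
  thus ?thesis by (rule RR_prod)
qed

end
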